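(* Let $p,q\in\mathbb R$. The differential equation $$x^3R'''(x)+4x^2R''(x)+2x(1-2p^2-4qx+2x^2)R'(x)-4(p^2+qx)R(x)=0$$ admits a unique formal solution of the form $R(x)=\frac1\pi+\frac1\pi\sum_{n\ge1}\pi^n d_n x^{-n}$, and its coefficients are given by $$d_1=-\frac q\pi,\quad d_2=-\frac{p^2+q^2}{2\pi^2},\quad d_{n+2}=\frac1\pi\frac{2n+1}{n+2}q\,d_{n+1}+\frac{1}{\pi^2}\frac{n-1}{n+2}\Big(p^2-\frac{n^2}{4}\Big)d_n\quad(n\ge1).$$
   Context: This differential equation is satisfied by $R(x)=\frac1\pi\rho_{(1),\infty}(x/\pi;2,p,q)$, the rescaled bulk density at the spectrum singularity of the generalised circular Jacobi ensemble with $\beta=2$ (probability density on $(-\pi,\pi]^N$ proportional to $\prod_l e^{q\theta_l}|1+e^{i\theta_l}|^{2p}\prod_{j<k}|e^{i\theta_k}-e^{i\theta_j}|^2$, with $\rho_{(1),\infty}(x)=\lim_{N\to\infty}\frac{2\pi}{N}\rho_{(1),N}(-\pi\,\mathrm{sgn}(x)+2\pi x/N)$). The series $\sum_n d_n x^{-n}$ is the non-oscillatory part of the large-$|x|$ asymptotic expansion of $\rho_{(1),\infty}(x;2,p,q)-1$. *)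

theory Defs
  imports Complex_Main
begin

text \<open>A formal (Laurent-type) series in the variable x is represented by its coefficient
  function c :: int \<Rightarrow> real, c k being the coefficient of x^k.  Formal series in
  x^(-1) are those with c k = 0 for k > 0.\<close>

definition fser_deriv :: "(int \<Rightarrow> real) \<Rightarrow> int \<Rightarrow> real" where
  "fser_deriv f = (\<lambda>k. of_int (k + 1) * f (k + 1))"

definition fser_xpow :: "nat \<Rightarrow> (int \<Rightarrow> real) \<Rightarrow> int \<Rightarrow> real" where
  "fser_xpow n f = (\<lambda>k. f (k - int n))"

definition ode_lhs :: "real \<Rightarrow> real \<Rightarrow> (int \<Rightarrow> real) \<Rightarrow> int \<Rightarrow> real" where
  "ode_lhs p q R = (\<lambda>k.
       fser_xpow 3 (fser_deriv (fser_deriv (fser_deriv R))) k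
     + 4 * fser_xpow 2 (fser_deriv (fser_deriv R)) k
     + 2 * (1 - 2 * p^2) * fser_xpow 1 (fser_deriv R) k
     - 8 * q * fser_xpow 2 (fser_deriv R) k
     + 4 * fser_xpow 3 (fser_deriv R) k
     - 4 * p^2 * R k
     - 4 * q * fser_xpow 1 R k)"

text \<open>The formal series R(x) = 1/pi + (1/pi) * sum_{n>=1} pi^n d_n x^(-n)
  (the value d 0 is irrelevant).\<close>
definition R_series :: "(nat \<Rightarrow> real) \<Rightarrow> int \<Rightarrow> real" where
  "R_series d = (\<lambda>k. if k > 0 then 0
                     else if k = 0 then 1 / pi
                     else (1 / pi) * pi ^ nat (- k) * d (nat (- k)))"

end

theory Submission
  imports Defs
begin

lemma ode_coeff: "ode_lhs p q R k = of_int (k+1) * (of_int k ^ 2 - 4*p^2) * R k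
   - 4*q*of_int (2*k-1) * R (k-1) + 4 * of_int (k-2) * R (k-2)"
  unfolding ode_lhs_def fser_xpow_def fser_deriv_def
  by (simp add: algebra_simps power2_eq_square)

lemma Rneg: "R_series d (- int n) = (if n = 0 then 1/pi else pi^(n-1) * d n)"
  unfolding R_series_def by (auto simp: power_eq_if)

lemma eqn_neg:
  assumes "m \<ge> 1"
  shows "ode_lhs p q (R_series d) (- int m) = pi^(m-1) *
     ((1 - real m) * (real m ^ 2 - 4*p^2) * d m + 4*q*(2*real m+1)*pi * d (m+1)
      - 4*(real m+2)*pi^2 * d (m+2))"
proof -
  have a: "- int m - 1 = - int (m+1)" "- int m - 2 = - int (m+2)" by auto
  have b: "pi^(m+1-1) = pi^(m-1)*pi" "pi^(m+2-1) = pi^(m-1)*pi^2"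
    using assms by (cases m; simp add: power2_eq_square)+
  show ?thesis
    unfolding ode_coeff a Rneg using assms b
    by (simp add: algebra_simps power2_eq_square)
qed

lemma eqn1: "ode_lhs p q (R_series d) 1 = 4 * (- q/pi - d 1)"
  unfolding ode_coeff by (simp add: R_series_def)

lemma eqn0: "ode_lhs p q (R_series d) 0 = -4*p^2/pi + 4*q*d 1 - 8*pi*d 2"
  unfolding ode_coeff by (simp add: R_series_def power2_eq_square)

lemma rec_iff:
  assumes "n \<ge> 1"
  shows "((1 - real n) * (real n ^ 2 - 4*p^2) * d n + 4*q*(2*real n+1)*pi * d (n+1)
      - 4*(real n+2)*pi^2 * d (n+2) = 0) \<longleftrightarrow>
    d (n + 2) = (1 / pi) * ((2 * real n + 1) / (real n + 2)) * q * d (n + 1)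
                 + (1 / pi^2) * ((real n - 1) / (real n + 2)) * (p^2 - (real n)^2 / 4) * d n"
proof -
  define c where "c = 4*(real n+2)*pi^2"
  define e where "e = 4*q*(2*real n+1)*pi * d (n+1) + (1 - real n) * (real n ^ 2 - 4*p^2) * d n"
  have c: "c \<noteq> 0" unfolding c_def by simp
  have r: "(1 / pi) * ((2 * real n + 1) / (real n + 2)) * q * d (n + 1)
                 + (1 / pi^2) * ((real n - 1) / (real n + 2)) * (p^2 - (real n)^2 / 4) * d n = e / c"
  proof -
    have h: "pi \<noteq> 0" "real n + 2 \<noteq> 0" by auto
    show ?thesis unfolding c_def e_def
      apply (subst eq_divide_eq) using h apply simp
      using h by (simp add: divide_simps power2_eq_square) (simp add: algebra_simps)
  qed
  have l: "(1 - real n) * (real n ^ 2 - 4*p^2) * d n + 4*q*(2*real n+1)*pi * d (n+1)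
      - 4*(real n+2)*pi^2 * d (n+2) = e - c * d (n+2)" unfolding c_def e_def by simp
  show ?thesis unfolding l r using c by (auto simp: field_simps)
qed

definition P :: "real \<Rightarrow> real \<Rightarrow> (nat \<Rightarrow> real) \<Rightarrow> bool" where
  "P p q d \<longleftrightarrow> d 1 = - q / pi
        \<and> d 2 = - (p^2 + q^2) / (2 * pi^2)
        \<and> (\<forall>n\<ge>1. d (n + 2) = (1 / pi) * ((2 * real n + 1) / (real n + 2)) * q * d (n + 1)
                 + (1 / pi^2) * ((real n - 1) / (real n + 2)) * (p^2 - (real n)^2 / 4) * d n)"

lemma ode_P: assumes "ode_lhs p q (R_series d) = (\<lambda>k. 0)" shows "P p q d"
proof -
  have e: "ode_lhs p q (R_series d) k = 0" for k using assms by simp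
  have d1: "d 1 = - q/pi" using e[of 1] unfolding eqn1 by simp
  have "-4*p^2/pi + 4*q*d 1 - 8*pi*d 2 = 0" using e[of 0] unfolding eqn0 .
  hence d2: "d 2 = - (p^2 + q^2) / (2 * pi^2)" unfolding d1
    by (simp add: field_simps) (simp add: algebra_simps power2_eq_square)
  have "\<forall>n\<ge>1. d (n + 2) = (1 / pi) * ((2 * real n + 1) / (real n + 2)) * q * d (n + 1)
                 + (1 / pi^2) * ((real n - 1) / (real n + 2)) * (p^2 - (real n)^2 / 4) * d n"
  proof (intro allI impI)
    fix n :: nat assume n: "n \<ge> 1"
    have "pi^(n-1) \<noteq> 0" by simp
    with e[of "- int n"] show "d (n + 2) = (1 / pi) * ((2 * real n + 1) / (real n + 2)) * q * d (n + 1)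
                 + (1 / pi^2) * ((real n - 1) / (real n + 2)) * (p^2 - (real n)^2 / 4) * d n"
      unfolding eqn_neg[OF n] rec_iff[OF n, symmetric] by simp
  qed
  with d1 d2 show ?thesis unfolding P_def by blast
qed

lemma P_ode: assumes "P p q d" shows "ode_lhs p q (R_series d) = (\<lambda>k. 0)"
proof
  fix k :: int
  have d1: "d 1 = - q/pi" and d2: "d 2 = - (p^2 + q^2) / (2 * pi^2)"
    and r: "\<And>n. n \<ge> 1 \<Longrightarrow> d (n + 2) = (1 / pi) * ((2 * real n + 1) / (real n + 2)) * q * d (n + 1)
                 + (1 / pi^2) * ((real n - 1) / (real n + 2)) * (p^2 - (real n)^2 / 4) * d n"
    using assms unfolding P_def by auto
  consider "k \<ge> 2" | "k = 1" | "k = 0" | "k < 0" by linarith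
  then show "ode_lhs p q (R_series d) k = 0"
  proof cases
    case 1
    then show ?thesis unfolding ode_coeff
      by (cases "k = 2") (auto simp: R_series_def)
  next
    case 2 then show ?thesis using d1 eqn1 by simp
  next
    case 3
    have a: "pi * d 1 = -q" using d1 by simp
    have b: "2*pi^2*d 2 = -(p^2+q^2)" using d2 by simp
    have "pi * ode_lhs p q (R_series d) 0 = -4*p^2 + 4*q*(pi*d 1) - 4*(2*pi^2*d 2)"
      unfolding eqn0 by (simp add: field_simps power2_eq_square)
    also have "\<dots> = 0" unfolding a b by (simp add: algebra_simps power2_eq_square)
    finally show ?thesis using 3 by simp
  next
    case 4
    define n where "n = nat (-k)"
    have n: "k = - int n" "n \<ge> 1" using 4 unfolding n_def by auto
    show ?thesis unfolding n(1) eqn_neg[OF n(2)] using rec_iff[OF n(2), of p d q] r[OF n(2)] by simp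
  qed
qed

fun dd :: "real \<Rightarrow> real \<Rightarrow> nat \<Rightarrow> real" where
  "dd p q 0 = 0"
| "dd p q (Suc 0) = - q / pi"
| "dd p q (Suc (Suc 0)) = - (p^2 + q^2) / (2 * pi^2)"
| "dd p q (Suc (Suc (Suc n))) = (1 / pi) * ((2 * real (Suc n) + 1) / (real (Suc n) + 2)) * q * dd p q (Suc n + 1)
                 + (1 / pi^2) * ((real (Suc n) - 1) / (real (Suc n) + 2)) * (p^2 - (real (Suc n))^2 / 4) * dd p q (Suc n)"

lemma P_dd: "P p q (dd p q)"
  unfolding P_def
proof (intro conjI allI impI)
  fix n :: nat assume "n \<ge> 1"
  then obtain m where "n = Suc m" by (cases n) auto
  then show "dd p q (n + 2) = (1 / pi) * ((2 * real n + 1) / (real n + 2)) * q * dd p q (n + 1)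
                 + (1 / pi^2) * ((real n - 1) / (real n + 2)) * (p^2 - (real n)^2 / 4) * dd p q n"
    by (simp del: of_nat_Suc add: numeral_2_eq_2)
qed (auto simp: numeral_2_eq_2)

lemma P_unique:
  assumes "P p q d" "P p q d'"
  shows "n \<ge> 1 \<Longrightarrow> d n = d' n"
proof (induction n rule: less_induct)
  case (less n)
  show ?case
  proof (cases "n \<le> 2")
    case True
    with less.prems have "n = 1 \<or> n = 2" by auto
    then show ?thesis using assms unfolding P_def by auto
  next
    case False
    define m where "m = n - 2"
    have m: "n = m + 2" "m \<ge> 1" using False unfolding m_def by auto
    have "d m = d' m" "d (m+1) = d' (m+1)" using less.IH m by auto
    then show ?thesis using assms m unfolding P_def by auto
  qed
qed

theorem proposition2p10:
  fixes p q :: real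
  shows "(\<exists>d. ode_lhs p q (R_series d) = (\<lambda>k. 0))
    \<and> (\<forall>d d'. ode_lhs p q (R_series d) = (\<lambda>k. 0) \<and> ode_lhs p q (R_series d') = (\<lambda>k. 0)
          \<longrightarrow> (\<forall>n\<ge>1. d n = d' n))
    \<and> (\<forall>d. ode_lhs p q (R_series d) = (\<lambda>k. 0) \<longrightarrow>
          d 1 = - q / pi
        \<and> d 2 = - (p^2 + q^2) / (2 * pi^2)
        \<and> (\<forall>n\<ge>1. d (n + 2) = (1 / pi) * ((2 * real n + 1) / (real n + 2)) * q * d (n + 1)
                 + (1 / pi^2) * ((real n - 1) / (real n + 2)) * (p^2 - (real n)^2 / 4) * d n))"
  using P_ode[OF P_dd] ode_P P_unique unfolding P_def[symmetric] by blast

end
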